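(* Let $a>0$, let $q$ be a continuous complex-valued function on $[-a,a]$, and for $h\in\mathbb{C}$ let $\mathbf{T}_h$ be the operator on $C[-a,a]$ defined in the context. Then for all $h_1,h_2\in\mathbb{C}$ and every $u\in C[-a,a]$, \[ \mathbf{T}_{h_2}u=\mathbf{T}_{h_1}\Big[u(x)+\frac{h_2-h_1}{2}\int_{-x}^{x}u(t)\,dt\Big]. \] In particular, with $T=\mathbf{T}_0$, \[ \mathbf{T}_{h}u=T\Big[u(x)+\frac{h}{2}\int_{-x}^{x}u(t)\,dt\Big]\quad\text{for all } h\in\mathbb{C},\ u\in C[-a,a]. \]
   Context: Let $H(u,v)$ be the unique (continuous) solution of the Goursat problem \[ \frac{\partial^2 H(u,v)}{\partial u\,\partial v}=q(u+v)H(u,v),\qquad H(u,0)=\frac12\int_0^u q(s)\,ds,\qquad H(0,v)=0, \] and put $K(x,t)=H\big(\tfrac{x+t}{2},\tfrac{x-t}{2}\big)$ for $-a\le x\le a$, $|t|\le|x|$. For $h\in\mathbb{C}$ define \[ \mathbf{K}(x,t;h)=\frac h2+K(x,t)+\frac h2\int_t^x\big(K(x,s)-K(x,-s)\big)\,ds, \qquad \mathbf{T}_h u(x)=u(x)+\int_{-x}^{x}\mathbf{K}(x,t;h)\,u(t)\,dt . \] Note $\mathbf{K}(x,t;0)=K(x,t)$, and $T:=\mathbf{T}_0$. *)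

theory Defs
  imports "HOL-Analysis.Analysis"
begin

definition oint :: "real \<Rightarrow> real \<Rightarrow> (real \<Rightarrow> complex) \<Rightarrow> complex" where
  "oint a b f = (if a \<le> b then integral {a..b} f else - integral {b..a} f)"

text \<open>Closed Goursat domain: the points (u,v) = ((x+t)/2,(x-t)/2) with |t| \<le> |x| \<le> a.\<close>
definition goursat_dom :: "real \<Rightarrow> (real \<times> real) set" where
  "goursat_dom a = {(u, v). \<bar>u\<bar> + \<bar>v\<bar> \<le> a}"

definition goursat_sol :: "real \<Rightarrow> (real \<Rightarrow> complex) \<Rightarrow> (real \<Rightarrow> real \<Rightarrow> complex) \<Rightarrow> bool" where
  "goursat_sol a q H \<longleftrightarrow>
     continuous_on (goursat_dom a) (\<lambda>p. H (fst p) (snd p)) \<and>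
     (\<forall>u. \<bar>u\<bar> \<le> a \<longrightarrow> H u 0 = oint 0 u q / 2) \<and>
     (\<forall>v. \<bar>v\<bar> \<le> a \<longrightarrow> H 0 v = 0) \<and>
     (\<forall>u v. \<bar>u\<bar> + \<bar>v\<bar> < a \<longrightarrow> (\<lambda>s. H u s) differentiable (at v)) \<and>
     (\<forall>u v. \<bar>u\<bar> + \<bar>v\<bar> < a \<longrightarrow>
        ((\<lambda>r. vector_derivative (\<lambda>s. H r s) (at v))
           has_vector_derivative (q (u + v) * H u v)) (at u))"

definition Kfun :: "(real \<Rightarrow> real \<Rightarrow> complex) \<Rightarrow> real \<Rightarrow> real \<Rightarrow> complex" where
  "Kfun H x t = H ((x + t) / 2) ((x - t) / 2)"

definition Kh :: "(real \<Rightarrow> real \<Rightarrow> complex) \<Rightarrow> complex \<Rightarrow> real \<Rightarrow> real \<Rightarrow> complex" where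
  "Kh H h x t = h / 2 + Kfun H x t + h / 2 * oint t x (\<lambda>s. Kfun H x s - Kfun H x (- s))"

definition Th :: "(real \<Rightarrow> real \<Rightarrow> complex) \<Rightarrow> complex \<Rightarrow> (real \<Rightarrow> complex) \<Rightarrow> real \<Rightarrow> complex" where
  "Th H h u x = u x + oint (- x) x (\<lambda>t. Kh H h x t * u t)"

end

theory Submission
  imports Defs
begin

lemma odd_int0:
  fixes f :: "real \<Rightarrow> complex"
  assumes "\<And>s. s \<in> {-r..r} \<Longrightarrow> f (-s) = - f s"
  shows "integral {-r..r} f = 0"
proof -
  have "integral {-r..r} f = integral {-r..r} (\<lambda>s. f (-s))"
    using Henstock_Kurzweil_Integration.integral_reflect_real[of r "-r" f] by simp
  also have "\<dots> = integral {-r..r} (\<lambda>s. - f s)"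
    by (rule integral_cong) (use assms in auto)
  also have "\<dots> = - integral {-r..r} f" by simp
  finally show ?thesis by simp
qed

lemma core:
  fixes k u :: "real \<Rightarrow> complex" and r :: real
  assumes r: "r \<ge> 0" and ck: "continuous_on {-r..r} k" and cu: "continuous_on {-r..r} u"
  defines "g \<equiv> (\<lambda>s. k s - k (-s))"
  defines "G \<equiv> (\<lambda>t. integral {t..r} g)"
  defines "V \<equiv> (\<lambda>t. integral {-r..t} u)"
  shows "integral {-r..r} g = 0 \<and> (\<forall>t\<in>{-r..r}. G (-t) = G t) \<and>
         integral {-r..r} (\<lambda>t. G t * u t) = integral {-r..r} (\<lambda>t. k t * (V t - V (-t)))"
proof -
  have neg: "(\<lambda>t. - t) ` {-r..r} \<subseteq> {-r..r}" by auto
  have cg: "continuous_on {-r..r} g" unfolding g_def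
    by (intro continuous_intros ck continuous_on_compose2[OF ck] neg) 
  have g0: "integral {-r..r} g = 0"
    by (rule odd_int0) (simp add: g_def)
  have Gev: "G (-t) = G t" if t: "t \<in> {-r..r}" for t
  proof -
    have ig: "g integrable_on {-r..r}" using cg integrable_continuous_real by blast
    have ev: "integral {-t..t} g = 0" if "0 \<le> t" "t \<le> r" for t
      by (rule odd_int0) (simp add: g_def)
    have sub: "g integrable_on {a..b}" if "-r \<le> a" "b \<le> r" for a b
      using integrable_on_subinterval[OF ig] that by auto
    show ?thesis
    proof (cases "t \<ge> 0")
      case True
      have "integral {-t..t} g + integral {t..r} g = integral {-t..r} g"
        by (rule Henstock_Kurzweil_Integration.integral_combine) (use True t sub in auto)
      then show ?thesis using ev[of t] True t unfolding G_def by simp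
    next
      case False
      have "integral {t..-t} g + integral {-t..r} g = integral {t..r} g"
        by (rule Henstock_Kurzweil_Integration.integral_combine) (use False t sub in auto)
      then show ?thesis using ev[of "-t"] False t unfolding G_def by simp
    qed
  qed
  have cG: "continuous_on {-r..r} G" unfolding G_def
    by (rule indefinite_integral_continuous_1') (use cg integrable_continuous_real in blast)
  have cV: "continuous_on {-r..r} V" unfolding V_def
    by (rule indefinite_integral_continuous_1) (use cu integrable_continuous_real in blast)
  have dG: "(G has_vector_derivative - g t) (at t within {-r..r})" if "t \<in> {-r..r}" for t
    unfolding G_def by (rule integral_has_vector_derivative'[OF cg that])
  have dV: "(V has_vector_derivative u t) (at t within {-r..r})" if "t \<in> {-r..r}" for t
    unfolding V_def by (rule integral_has_vector_derivative[OF cu that])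
  have "((\<lambda>t. G t * V t) has_vector_derivative (G t * u t + (- g t) * V t)) (at t within {-r..r})"
    if "t \<in> {-r..r}" for t
    using has_vector_derivative_mult[OF dG[OF that] dV[OF that]] by (simp add: algebra_simps)
  from fundamental_theorem_of_calculus[OF _ this]
  have "((\<lambda>t. G t * u t + (- g t) * V t) has_integral (G r * V r - G (-r) * V (-r))) {-r..r}"
    using r by simp
  moreover have "G r = 0" "V (-r) = 0" unfolding G_def V_def by auto
  ultimately have "((\<lambda>t. G t * u t + (- g t) * V t) has_integral 0) {-r..r}"
    by simp
  then have I0: "integral {-r..r} (\<lambda>t. G t * u t + (- g t) * V t) = 0"
    by (rule integral_unique)
  have int1: "(\<lambda>t. G t * u t) integrable_on {-r..r}"
    by (intro integrable_continuous_real continuous_intros cG cu)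
  have int2: "(\<lambda>t. (- g t) * V t) integrable_on {-r..r}"
    by (intro integrable_continuous_real continuous_intros cg cV)
  have A: "integral {-r..r} (\<lambda>t. G t * u t) = integral {-r..r} (\<lambda>t. g t * V t)"
    using I0 integral_add[OF int1 int2] by (simp add: algebra_simps)
  have B: "integral {-r..r} (\<lambda>t. k (-t) * V t) = integral {-r..r} (\<lambda>t. k t * V (-t))"
    using Henstock_Kurzweil_Integration.integral_reflect_real[of r "-r" "\<lambda>t. k (-t) * V t"] by simp
  have ckm: "continuous_on {-r..r} (\<lambda>t. k (-t))"
    by (intro continuous_on_compose2[OF ck] continuous_intros neg)
  have cVm: "continuous_on {-r..r} (\<lambda>t. V (-t))"
    by (intro continuous_on_compose2[OF cV] continuous_intros neg)
  have "integral {-r..r} (\<lambda>t. g t * V t) = integral {-r..r} (\<lambda>t. k t * V t - k (-t) * V t)"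
    by (simp add: g_def algebra_simps)
  also have "\<dots> = integral {-r..r} (\<lambda>t. k t * V t) - integral {-r..r} (\<lambda>t. k (-t) * V t)"
    by (rule integral_diff) (intro integrable_continuous_real continuous_intros ck cV ckm)+
  also have "\<dots> = integral {-r..r} (\<lambda>t. k t * V t) - integral {-r..r} (\<lambda>t. k t * V (-t))"
    using B by simp
  also have "\<dots> = integral {-r..r} (\<lambda>t. k t * V t - k t * V (-t))"
    by (rule integral_diff[symmetric]) (intro integrable_continuous_real continuous_intros ck cV cVm)+
  also have "\<dots> = integral {-r..r} (\<lambda>t. k t * (V t - V (-t)))"
    by (simp add: algebra_simps)
  finally show ?thesis using A Gev g0 by auto
qed

lemma main_pt:
  fixes a :: real and q :: "real \<Rightarrow> complex" and H :: "real \<Rightarrow> real \<Rightarrow> complex"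
  assumes gs: "goursat_sol a q H"
    and cu0: "continuous_on {-a..a} u" and x: "x \<in> {-a..a}"
  shows "Th H h2 u x = Th H h1 (\<lambda>y. u y + (h2 - h1) / 2 * oint (- y) y u) x"
proof -
  define r where "r = \<bar>x\<bar>"
  define k where "k = Kfun H x"
  define \<sigma> :: complex where "\<sigma> = (if x \<ge> 0 then 1 else -1)"
  define g where "g = (\<lambda>s. k s - k (-s))"
  define G where "G = (\<lambda>t. integral {t..r} g)"
  define V where "V = (\<lambda>t. integral {-r..t} u)"
  define U where "U = (\<lambda>y. oint (- y) y u)"
  define c where "c = (h2 - h1) / 2"
  have r0: "r \<ge> 0" and ra: "r \<le> a" using x by (auto simp: r_def)
  have cu: "continuous_on {-r..r} u"
    by (rule continuous_on_subset[OF cu0]) (use ra in auto)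
  have ck: "continuous_on {-r..r} k"
  proof -
    have cH: "continuous_on (goursat_dom a) (\<lambda>p. H (fst p) (snd p))"
      using gs by (simp add: goursat_sol_def)
    have "continuous_on {-r..r} (\<lambda>t. (\<lambda>p. H (fst p) (snd p)) ((x + t) / 2, (x - t) / 2))"
    proof (rule continuous_on_compose2[OF cH])
      show "continuous_on {-r..r} (\<lambda>t. ((x + t) / 2, (x - t) / 2))"
        by (intro continuous_intros) auto
      show "(\<lambda>t. ((x + t) / 2, (x - t) / 2)) ` {-r..r} \<subseteq> goursat_dom a"
      proof (rule image_subsetI)
        fix t assume t: "t \<in> {-r..r}"
        show "((x + t) / 2, (x - t) / 2) \<in> goursat_dom a"
          using t ra unfolding r_def goursat_dom_def by (cases "x + t \<ge> 0"; cases "x - t \<ge> 0"; cases "x \<ge> 0") (auto simp: field_simps)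
      qed
    qed
    then show ?thesis by (simp add: k_def Kfun_def)
  qed
  note C = core[OF r0 ck cu, folded g_def, folded G_def V_def]
  have g0: "integral {-r..r} g = 0" and Gev: "\<And>t. t \<in> {-r..r} \<Longrightarrow> G (-t) = G t"
    and F4: "integral {-r..r} (\<lambda>t. G t * u t) = integral {-r..r} (\<lambda>t. k t * (V t - V (-t)))"
    using C unfolding G_def V_def by auto
  have neg: "(\<lambda>t. - t) ` {-r..r} \<subseteq> {-r..r}" by auto
  have cg: "continuous_on {-r..r} g" unfolding g_def
    by (intro continuous_intros ck continuous_on_compose2[OF ck] neg) 
  have ig: "g integrable_on {-r..r}" using cg integrable_continuous_real by blast
  have iu: "u integrable_on {-r..r}" using cu integrable_continuous_real by blast
  have cG: "continuous_on {-r..r} G" unfolding G_def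
    by (rule indefinite_integral_continuous_1') (use ig in blast)
  have cV: "continuous_on {-r..r} V" unfolding V_def
    by (rule indefinite_integral_continuous_1) (use iu in blast)
  have UV: "U t = V t - V (-t)" if t: "t \<in> {-r..r}" for t
  proof (cases "t \<ge> 0")
    case True
    have "integral {-r..-t} u + integral {-t..t} u = integral {-r..t} u"
      by (rule Henstock_Kurzweil_Integration.integral_combine)
         (use True t integrable_on_subinterval[OF iu] in auto)
    then show ?thesis using True by (simp add: U_def V_def oint_def algebra_simps)
  next
    case False
    have "integral {-r..t} u + integral {t..-t} u = integral {-r..-t} u"
      by (rule Henstock_Kurzweil_Integration.integral_combine)
         (use False t integrable_on_subinterval[OF iu] in auto)
    then show ?thesis using False by (simp add: U_def V_def oint_def algebra_simps)
  qed
  have cU: "continuous_on {-r..r} U"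
    by (rule continuous_on_eq[of _ "\<lambda>t. V t - V (-t)"])
       (auto intro!: continuous_intros cV continuous_on_compose2[OF cV] neg simp: UV)
  have osig: "oint (- x) x F = \<sigma> * integral {-r..r} F" for F
    by (auto simp: oint_def \<sigma>_def r_def)
  have oG: "oint t x g = G t" if t: "t \<in> {-r..r}" for t
  proof (cases "x \<ge> 0")
    case True
    then show ?thesis using t by (auto simp: oint_def G_def r_def)
  next
    case False
    have "integral {-r..t} g + integral {t..r} g = integral {-r..r} g"
      by (rule Henstock_Kurzweil_Integration.integral_combine)
         (use t integrable_on_subinterval[OF ig] in auto)
    then show ?thesis using False t g0 by (auto simp: oint_def G_def r_def) (metis add_eq_0_iff)
  qed
  have Th: "Th H h w x = w x + \<sigma> * integral {-r..r} (\<lambda>t. (k t + h / 2 * (1 + G t)) * w t)"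
    for h w
  proof -
    have "integral {-r..r} (\<lambda>t. Kh H h x t * w t) =
          integral {-r..r} (\<lambda>t. (k t + h / 2 * (1 + G t)) * w t)"
      by (rule integral_cong)
         (simp add: Kh_def oG k_def[symmetric] g_def[symmetric] algebra_simps)
    then show ?thesis by (simp add: Th_def osig)
  qed
  have int: "f integrable_on {-r..r}" if "continuous_on {-r..r} f" for f :: "real \<Rightarrow> complex"
    using that integrable_continuous_real by blast
  define A where "A = (\<lambda>h t. k t + h / 2 * (1 + G t))"
  have cA: "continuous_on {-r..r} (A h)" for h
    unfolding A_def by (intro continuous_intros ck cG)
  have E1: "integral {-r..r} (\<lambda>t. A h t * u t) =
      integral {-r..r} (\<lambda>t. k t * u t) + h / 2 * integral {-r..r} (\<lambda>t. (1 + G t) * u t)" for h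
  proof -
    have "integral {-r..r} (\<lambda>t. A h t * u t) =
        integral {-r..r} (\<lambda>t. k t * u t + h / 2 * ((1 + G t) * u t))"
      by (rule integral_cong) (simp add: A_def field_simps)
    also have "\<dots> = integral {-r..r} (\<lambda>t. k t * u t) + integral {-r..r} (\<lambda>t. h / 2 * ((1 + G t) * u t))"
      by (rule integral_add) (intro int continuous_intros ck cu cG)+
    finally show ?thesis by simp
  qed
  have E2: "integral {-r..r} (\<lambda>t. (1 + G t) * u t) =
      integral {-r..r} u + integral {-r..r} (\<lambda>t. k t * U t)"
  proof -
    have "integral {-r..r} (\<lambda>t. (1 + G t) * u t) = integral {-r..r} (\<lambda>t. u t + G t * u t)"
      by (rule integral_cong) (simp add: field_simps)
    also have "\<dots> = integral {-r..r} u + integral {-r..r} (\<lambda>t. G t * u t)"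
      by (rule integral_add) (intro int continuous_intros cu cG)+
    also have "integral {-r..r} (\<lambda>t. G t * u t) = integral {-r..r} (\<lambda>t. k t * U t)"
      unfolding F4 by (rule integral_cong) (simp add: UV)
    finally show ?thesis .
  qed
  have E3: "integral {-r..r} (\<lambda>t. A h t * (u t + c * U t)) =
      integral {-r..r} (\<lambda>t. A h t * u t) + c * integral {-r..r} (\<lambda>t. A h t * U t)" for h
  proof -
    have "integral {-r..r} (\<lambda>t. A h t * (u t + c * U t)) =
        integral {-r..r} (\<lambda>t. A h t * u t + c * (A h t * U t))"
      by (rule integral_cong) (simp add: field_simps)
    also have "\<dots> = integral {-r..r} (\<lambda>t. A h t * u t) + integral {-r..r} (\<lambda>t. c * (A h t * U t))"
      by (rule integral_add) (intro int continuous_intros cA cu cU)+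
    finally show ?thesis by simp
  qed
  have E4: "integral {-r..r} (\<lambda>t. A h t * U t) = integral {-r..r} (\<lambda>t. k t * U t)" for h
  proof -
    have "integral {-r..r} (\<lambda>t. A h t * U t) =
        integral {-r..r} (\<lambda>t. k t * U t + h / 2 * ((1 + G t) * U t))"
      by (rule integral_cong) (simp add: A_def field_simps)
    also have "\<dots> = integral {-r..r} (\<lambda>t. k t * U t) + integral {-r..r} (\<lambda>t. h / 2 * ((1 + G t) * U t))"
      by (rule integral_add) (intro int continuous_intros ck cU cG)+
    also have "integral {-r..r} (\<lambda>t. h / 2 * ((1 + G t) * U t)) = h / 2 * integral {-r..r} (\<lambda>t. (1 + G t) * U t)"
      by simp
    also have "integral {-r..r} (\<lambda>t. (1 + G t) * U t) = 0"
      by (rule odd_int0) (simp add: Gev UV algebra_simps)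
    finally show ?thesis by simp
  qed
  have Ux: "U x = \<sigma> * integral {-r..r} u" by (simp add: U_def osig)
  have ThA: "Th H h w x = w x + \<sigma> * integral {-r..r} (\<lambda>t. A h t * w t)" for h w
    by (simp add: Th A_def)
  have eqf: "(\<lambda>y. u y + (h2 - h1) / 2 * oint (- y) y u) = (\<lambda>y. u y + c * U y)"
    by (simp add: c_def U_def)
  have L: "Th H h2 u x = u x + \<sigma> * (integral {-r..r} (\<lambda>t. k t * u t) + h2 / 2 *
       (integral {-r..r} u + integral {-r..r} (\<lambda>t. k t * U t)))"
    by (simp only: ThA E1 E2)
  have R: "Th H h1 (\<lambda>y. u y + c * U y) x = (u x + c * U x) + \<sigma> * ((integral {-r..r} (\<lambda>t. k t * u t) + h1 / 2 *
       (integral {-r..r} u + integral {-r..r} (\<lambda>t. k t * U t))) + c * integral {-r..r} (\<lambda>t. k t * U t))"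
    by (simp only: ThA E3 E4 E1 E2)
  show ?thesis
    unfolding eqf L R by (simp add: Ux c_def field_simps)
qed

theorem mainTheorem2:
  fixes a :: real and q :: "real \<Rightarrow> complex" and H :: "real \<Rightarrow> real \<Rightarrow> complex"
  assumes "a > 0"
    and "continuous_on {-a..a} q"
    and "goursat_sol a q H"
  shows "(\<forall>h1 h2 u x. continuous_on {-a..a} u \<longrightarrow> x \<in> {-a..a} \<longrightarrow>
            Th H h2 u x = Th H h1 (\<lambda>y. u y + (h2 - h1) / 2 * oint (- y) y u) x) \<and>
         (\<forall>h u x. continuous_on {-a..a} u \<longrightarrow> x \<in> {-a..a} \<longrightarrow>
            Th H h u x = Th H 0 (\<lambda>y. u y + h / 2 * oint (- y) y u) x)"
  using main_pt[OF assms(3)] main_pt[OF assms(3), of _ _ _ 0] by auto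

end
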